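(* Let $p$ be a prime and let $f$ be one of the following automorphisms of $\mathbb{Z}_p^2$ (acting on column vectors): $D(b,c)=\begin{bmatrix} b&0\\0&c\end{bmatrix}$ with $1<b\le c<p$; $G(b)=\begin{bmatrix} b&1\\0&b\end{bmatrix}$ with $1<b<p$; $H(q)=\begin{bmatrix}0&1\\-b_0&-b_1\end{bmatrix}$ where $q=x^2+b_1x+b_0$ is irreducible over $\mathbb{Z}_p$. Then the (connected) quandle $\mathrm{Aff}(\mathbb{Z}_p^2,f)$ is simply connected if and only if $f$ is one of: (i) $D(b,c)$ with $bc\not\equiv 1\pmod p$; (ii) $G(b)$ with $b\not\equiv -1\pmod p$; (iii) $H(q)$ with $q=x^2+b_1x+b_0$ and $b_0\neq 1$.
   Context: A quandle is a set $Q$ with a binary operation $*$ such that every left translation $L_x:y\mapsto x*y$ is bijective, $x*(y*z)=(x*y)*(x*z)$ and $x*x=x$. For an abelian group $A$ and $f\in\mathrm{Aut}(A)$, the affine quandle $\mathrm{Aff}(A,f)$ is $A$ with $x*y=x+f(y-x)$. $Q$ is connected if $\langle L_x:x\in Q\rangle$ is transitive on $Q$. Every connected affine quandle over $\mathbb{Z}_p^2$ is isomorphic to $\mathrm{Aff}(\mathbb{Z}_p^2,f)$ for $f$ in the list above. For a set $S$, a quandle cocycle with values in $\mathrm{Sym}_S$ is $\theta:Q\times Q\to\mathrm{Sym}_S$ with $\theta_{x*y,x*z}\theta_{x,z}=\theta_{x,y*z}\theta_{y,z}$ and $\theta_{x,x}=1$; it is cohomologous to the trivial cocycle if there is $\gamma:Q\to\mathrm{Sym}_S$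 with $\theta_{x,y}=\gamma_{x*y}\gamma_y^{-1}$ for all $x,y$. $Q$ is simply connected if it is connected and, for every set $S$, every quandle cocycle with values in $\mathrm{Sym}_S$ is cohomologous to the trivial cocycle. *)

theory Defs
  imports Main "HOL-Combinatorics.Permutations" "HOL-Computational_Algebra.Primes"
begin

definition is_quandle :: "'q set \<Rightarrow> ('q \<Rightarrow> 'q \<Rightarrow> 'q) \<Rightarrow> bool" where
  "is_quandle Q op \<longleftrightarrow>
     (\<forall>x\<in>Q. \<forall>y\<in>Q. op x y \<in> Q) \<and>
     (\<forall>x\<in>Q. bij_betw (op x) Q Q) \<and>
     (\<forall>x\<in>Q. \<forall>y\<in>Q. \<forall>z\<in>Q. op x (op y z) = op (op x y) (op x z)) \<and>
     (\<forall>x\<in>Q. op x x = x)"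

text \<open>Connected: the group generated by the left translations L_x acts transitively.
  The orbit of y under this group is the equivalence class of y w.r.t. the
  reflexive-transitive-symmetric closure of y ~ x*y.\<close>
definition quandle_connected :: "'q set \<Rightarrow> ('q \<Rightarrow> 'q \<Rightarrow> 'q) \<Rightarrow> bool" where
  "quandle_connected Q op \<longleftrightarrow>
     (let R = {(y, op x y) | x y. x \<in> Q \<and> y \<in> Q} in
       \<forall>y\<in>Q. \<forall>z\<in>Q. (y, z) \<in> (R \<union> R\<inverse>)\<^sup>*)"

text \<open>Sym_S is represented by the permutations of S (functions fixing everything outside S),
  the group product being composition.\<close>
definition quandle_cocycle ::
  "'q set \<Rightarrow> ('q \<Rightarrow> 'q \<Rightarrow> 'q) \<Rightarrow> 's set \<Rightarrow> ('q \<Rightarrow> 'q \<Rightarrow> 's \<Rightarrow> 's) \<Rightarrow> bool" where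
  "quandle_cocycle Q op S \<theta> \<longleftrightarrow>
     (\<forall>x\<in>Q. \<forall>y\<in>Q. \<theta> x y permutes S) \<and>
     (\<forall>x\<in>Q. \<forall>y\<in>Q. \<forall>z\<in>Q.
        \<theta> (op x y) (op x z) \<circ> \<theta> x z = \<theta> x (op y z) \<circ> \<theta> y z) \<and>
     (\<forall>x\<in>Q. \<theta> x x = id)"

definition cohomologous_trivial ::
  "'q set \<Rightarrow> ('q \<Rightarrow> 'q \<Rightarrow> 'q) \<Rightarrow> 's set \<Rightarrow> ('q \<Rightarrow> 'q \<Rightarrow> 's \<Rightarrow> 's) \<Rightarrow> bool" where
  "cohomologous_trivial Q op S \<theta> \<longleftrightarrow>
     (\<exists>\<gamma>. (\<forall>x\<in>Q. \<gamma> x permutes S) \<and>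
          (\<forall>x\<in>Q. \<forall>y\<in>Q. \<theta> x y = \<gamma> (op x y) \<circ> inv (\<gamma> y)))"

text \<open>Simply connected, with the sets S ranging over subsets of a type 's
  (the theorem is stated for an arbitrary infinite type 's).\<close>
definition simply_connected ::
  "'q set \<Rightarrow> ('q \<Rightarrow> 'q \<Rightarrow> 'q) \<Rightarrow> 's itself \<Rightarrow> bool" where
  "simply_connected Q op (_ :: 's itself) \<longleftrightarrow>
     quandle_connected Q op \<and>
     (\<forall>(S :: 's set) \<theta>. quandle_cocycle Q op S \<theta> \<longrightarrow> cohomologous_trivial Q op S \<theta>)"

text \<open>Z_p^2 = pairs of residues in {0..<p}; a 2x2 matrix [[a,b],[c,d]] is the tuple (a,b,c,d),
  acting on column vectors.\<close>
type_synonym mat2 = "int \<times> int \<times> int \<times> int"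

definition Zp2 :: "int \<Rightarrow> (int \<times> int) set" where
  "Zp2 p = {0..<p} \<times> {0..<p}"

definition mat_apply :: "int \<Rightarrow> mat2 \<Rightarrow> int \<times> int \<Rightarrow> int \<times> int" where
  "mat_apply p M v = (case M of (a, b, c, d) \<Rightarrow>
     ((a * fst v + b * snd v) mod p, (c * fst v + d * snd v) mod p))"

definition aff_op :: "int \<Rightarrow> mat2 \<Rightarrow> int \<times> int \<Rightarrow> int \<times> int \<Rightarrow> int \<times> int" where
  "aff_op p M x y =
     (let w = mat_apply p M (fst y - fst x, snd y - snd x)
      in ((fst x + fst w) mod p, (snd x + snd w) mod p))"

definition Dmat :: "int \<Rightarrow> int \<Rightarrow> mat2" where "Dmat b c = (b, 0, 0, c)"
definition Gmat :: "int \<Rightarrow> mat2" where "Gmat b = (b, 1, 0, b)"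
definition Hmat :: "int \<Rightarrow> int \<Rightarrow> mat2" where "Hmat b1 b0 = (0, 1, - b0, - b1)"

definition irreducible_quadratic_mod :: "int \<Rightarrow> int \<Rightarrow> int \<Rightarrow> bool" where
  "irreducible_quadratic_mod p b1 b0 \<longleftrightarrow>
     \<not> (\<exists>a1 a0 c1 c0. a1 mod p \<noteq> 0 \<and> c1 mod p \<noteq> 0 \<and>
          (a1 * c1) mod p = 1 mod p \<and>
          (a1 * c0 + a0 * c1) mod p = b1 mod p \<and>
          (a0 * c0) mod p = b0 mod p)"

end

theory Submission
  imports Defs "HOL-Number_Theory.Cong"
begin

lemma cong_norm: "[X = X0] (mod p) \<Longrightarrow> [Y = Y0] (mod p) \<Longrightarrow> X0 = Y0 \<Longrightarrow> X mod p = Y mod (p::int)"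
  by (metis cong_def cong_sym cong_trans)
lemma cong_norm2: "[X = X0] (mod p) \<Longrightarrow> [Y = Y0] (mod p) \<Longrightarrow> [X0 = Y0] (mod p) \<Longrightarrow> X mod p = Y mod (p::int)"
  by (metis cong_def cong_sym cong_trans)
lemma cong_modI: "[t = t'] (mod p) \<Longrightarrow> [t mod p = t'] (mod (p::int))"
  by (simp add: cong_def)
lemmas cstrip = cong_modI cong_add cong_diff cong_mult cong_minus_minus_iff[THEN iffD2] cong_refl

definition vadd :: "int \<Rightarrow> int \<times> int \<Rightarrow> int \<times> int \<Rightarrow> int \<times> int" where
  "vadd p u v = ((fst u + fst v) mod p, (snd u + snd v) mod p)"
definition vneg :: "int \<Rightarrow> int \<times> int \<Rightarrow> int \<times> int" where
  "vneg p u = ((- fst u) mod p, (- snd u) mod p)"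
definition smul :: "int \<Rightarrow> nat \<Rightarrow> int \<times> int \<Rightarrow> int \<times> int" where
  "smul p n u = ((int n * fst u) mod p, (int n * snd u) mod p)"

locale affq =
  fixes p ma mb mc md :: int
  assumes pr: "prime p"
    and df: "(ma * md - mb * mc) mod p \<noteq> 0"
    and dg: "((1 - ma) * (1 - md) - mb * mc) mod p \<noteq> 0"
begin

abbreviation "Q \<equiv> Zp2 p"
abbreviation "F \<equiv> mat_apply p (ma, mb, mc, md)"
abbreviation "G \<equiv> mat_apply p (1 - ma, - mb, - mc, 1 - md)"
abbreviation "opr \<equiv> aff_op p (ma, mb, mc, md)"
abbreviation "vo \<equiv> ((0::int), (0::int))"
abbreviation "e1 \<equiv> ((1::int), (0::int))"
abbreviation "e2 \<equiv> ((0::int), (1::int))"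

lemma p_gt1: "p > 1" using pr prime_gt_1_int by blast
lemma p_pos: "p > 0" using p_gt1 by simp

lemma memQ: "x \<in> Q \<longleftrightarrow> 0 \<le> fst x \<and> fst x < p \<and> 0 \<le> snd x \<and> snd x < p"
  by (cases x) (auto simp: Zp2_def)

lemma modQ: "((a::int) mod p, b mod p) \<in> Q"
  using p_pos by (simp add: memQ)

lemma Q_fst: "x \<in> Q \<Longrightarrow> fst x mod p = fst x" by (simp add: memQ)
lemma Q_snd: "x \<in> Q \<Longrightarrow> snd x mod p = snd x" by (simp add: memQ)

lemma vadd_Q[simp]: "vadd p u v \<in> Q" by (simp add: vadd_def modQ)
lemma vneg_Q[simp]: "vneg p u \<in> Q" by (simp add: vneg_def modQ)
lemma smul_Q[simp]: "smul p n u \<in> Q" by (simp add: smul_def modQ)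
lemma mat_Q[simp]: "mat_apply p N v \<in> Q" by (cases N) (auto simp: mat_apply_def modQ)
lemma op_Q[simp]: "aff_op p N x y \<in> Q" by (simp add: aff_op_def Let_def modQ)
lemma vo_Q[simp]: "vo \<in> Q" using p_pos by (simp add: memQ)
lemma e1_Q[simp]: "e1 \<in> Q" using p_gt1 by (simp add: memQ)
lemma e2_Q[simp]: "e2 \<in> Q" using p_gt1 by (simp add: memQ)

lemma op_eq: "opr x y = vadd p (G x) (F y)"
  apply (simp add: aff_op_def vadd_def mat_apply_def Let_def)
  apply (rule conjI)
  apply (rule cong_norm, (rule cstrip)+, simp add: algebra_simps)+
  done

lemma vadd_comm: "vadd p u v = vadd p v u" by (simp add: vadd_def add.commute)
lemma vadd_assoc: "vadd p (vadd p u v) w = vadd p u (vadd p v w)"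
  by (simp add: vadd_def mod_simps add.assoc)
lemma vadd_vo[simp]: "u \<in> Q \<Longrightarrow> vadd p u vo = u"
  by (cases u) (simp add: vadd_def memQ)
lemma vo_vadd[simp]: "u \<in> Q \<Longrightarrow> vadd p vo u = u"
  by (cases u) (simp add: vadd_def memQ)
lemma vadd_vneg[simp]: "vadd p u (vneg p u) = vo"
  by (simp add: vadd_def vneg_def mod_simps)
lemma vneg_vadd[simp]: "vadd p (vneg p u) u = vo"
  by (simp add: vadd_def vneg_def mod_simps)
lemma vadd_cancel: "u \<in> Q \<Longrightarrow> vadd p (vadd p u (vneg p v)) v = u"
  by (simp add: vadd_assoc)

lemma F_add: "F (vadd p u v) = vadd p (F u) (F v)"
  apply (simp add: vadd_def mat_apply_def)
  apply (rule conjI)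
  apply (rule cong_norm, (rule cstrip)+, simp add: algebra_simps)+
  done
lemma G_add: "G (vadd p u v) = vadd p (G u) (G v)"
  apply (simp add: vadd_def mat_apply_def)
  apply (rule conjI)
  apply (rule cong_norm, (rule cstrip)+, simp add: algebra_simps)+
  done
lemma F_vo[simp]: "F vo = vo" by (simp add: mat_apply_def)
lemma G_vo[simp]: "G vo = vo" by (simp add: mat_apply_def)
lemma FG: "F (G x) = G (F x)"
  apply (simp add: mat_apply_def)
  apply (rule conjI)
  apply (rule cong_norm, (rule cstrip)+, simp add: algebra_simps)+
  done

lemma op_idem: "x \<in> Q \<Longrightarrow> opr x x = x"
  apply (cases x)
  apply (simp add: aff_op_def Let_def mat_apply_def memQ)
  done

lemma op_dist: "opr x (opr y z) = opr (opr x y) (opr x z)"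
  apply (simp add: aff_op_def mat_apply_def Let_def)
  apply (rule conjI)
  apply (rule cong_norm, (rule cstrip)+, simp add: algebra_simps)+
  done

lemma smul_0: "smul p 0 u = vo" by (simp add: smul_def)
lemma smul_Suc: "smul p (Suc n) u = vadd p u (smul p n u)"
  by (simp add: smul_def vadd_def mod_simps algebra_simps)
lemma smul_p: "smul p (nat p) e1 = vo" using p_pos by (simp add: smul_def)
lemma decomp: "u \<in> Q \<Longrightarrow> u = vadd p (smul p (nat (fst u)) e1) (smul p (nat (snd u)) e2)"
  by (cases u) (simp add: smul_def vadd_def memQ)


lemma finQ: "finite Q" unfolding Zp2_def by (intro finite_cartesian_product finite_atLeastLessThan_int)
lemma dvd_eq_small: "0 \<le> x \<Longrightarrow> x < p \<Longrightarrow> 0 \<le> y \<Longrightarrow> y < p \<Longrightarrow> p dvd (x - y) \<Longrightarrow> x = (y::int)"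
  by (metis mod_eq_dvd_iff mod_pos_pos_trivial)
lemma mat_inj:
  assumes d: "(a * d - b * c) mod p \<noteq> 0"
  shows "inj_on (mat_apply p (a, b, c, d)) Q"
proof (rule inj_onI)
  fix u v assume u: "u \<in> Q" and v: "v \<in> Q" and eq: "mat_apply p (a, b, c, d) u = mat_apply p (a, b, c, d) v"
  obtain u1 u2 v1 v2 where uu: "u = (u1, u2)" and vv: "v = (v1, v2)" by (cases u, cases v) auto
  from eq have e1': "(a * u1 + b * u2) mod p = (a * v1 + b * v2) mod p" and e2': "(c * u1 + d * u2) mod p = (c * v1 + d * v2) mod p"
    by (auto simp: mat_apply_def uu vv)
  have h1: "p dvd (a * (u1 - v1) + b * (u2 - v2))" using e1' by (simp add: mod_eq_dvd_iff algebra_simps)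
  have h2: "p dvd (c * (u1 - v1) + d * (u2 - v2))" using e2' by (simp add: mod_eq_dvd_iff algebra_simps)
  have "p dvd (d * (a * (u1 - v1) + b * (u2 - v2)) - b * (c * (u1 - v1) + d * (u2 - v2)))"
    using h1 h2 by simp
  hence "p dvd ((a * d - b * c) * (u1 - v1))" by (simp add: algebra_simps)
  moreover have nd: "\<not> p dvd (a * d - b * c)" using d by (simp add: dvd_eq_mod_eq_0)
  ultimately have d1: "p dvd (u1 - v1)" using pr prime_dvd_mult_iff by blast
  have "p dvd (a * (c * (u1 - v1) + d * (u2 - v2)) - c * (a * (u1 - v1) + b * (u2 - v2)))"
    using h1 h2 by simp
  hence "p dvd ((a * d - b * c) * (u2 - v2))" by (simp add: algebra_simps)
  hence d2: "p dvd (u2 - v2)" using nd pr prime_dvd_mult_iff by blast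
  have "u1 = v1" using u v by (intro dvd_eq_small[OF _ _ _ _ d1]) (auto simp: uu vv memQ)
  moreover have "u2 = v2" using u v by (intro dvd_eq_small[OF _ _ _ _ d2]) (auto simp: uu vv memQ)
  ultimately show "u = v" by (simp add: uu vv)
qed

lemma mat_bij:
  assumes d: "(a * d - b * c) mod p \<noteq> 0"
  shows "bij_betw (mat_apply p (a, b, c, d)) Q Q"
proof -
  have fin: "finite Q" by (rule finQ)
  have "mat_apply p (a, b, c, d) ` Q \<subseteq> Q" by auto
  with mat_inj[OF d] fin have "mat_apply p (a, b, c, d) ` Q = Q"
    by (simp add: endo_inj_surj)
  thus ?thesis using mat_inj[OF d] by (simp add: bij_betw_def)
qed

lemma F_bij: "bij_betw F Q Q" using mat_bij[OF df] .
lemma G_bij: "bij_betw G Q Q" using mat_bij[of "1 - ma" "1 - md" "- mb" "- mc"] dg by simp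

lemma F_surj: "z \<in> Q \<Longrightarrow> \<exists>x\<in>Q. F x = z" using bij_betw_imp_surj_on[OF F_bij] by (metis imageE)
lemma G_surj: "z \<in> Q \<Longrightarrow> \<exists>x\<in>Q. G x = z" using bij_betw_imp_surj_on[OF G_bij] by (metis imageE)
lemma F_inj: "x \<in> Q \<Longrightarrow> y \<in> Q \<Longrightarrow> F x = F y \<Longrightarrow> x = y" using bij_betw_imp_inj_on[OF F_bij] by (rule inj_onD)
lemma G_inj: "x \<in> Q \<Longrightarrow> y \<in> Q \<Longrightarrow> G x = G y \<Longrightarrow> x = y" using bij_betw_imp_inj_on[OF G_bij] by (rule inj_onD)

lemma op_o: "x \<in> Q \<Longrightarrow> opr x vo = G x" by (simp add: op_eq)
lemma op_o2: "y \<in> Q \<Longrightarrow> opr vo y = F y" by (simp add: op_eq)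

lemma L_bij: "x \<in> Q \<Longrightarrow> bij_betw (opr x) Q Q"
proof -
  assume x: "x \<in> Q"
  have inj: "inj_on (opr x) Q"
  proof (rule inj_onI)
    fix y z assume y: "y \<in> Q" and z: "z \<in> Q" and "opr x y = opr x z"
    hence "vadd p (G x) (F y) = vadd p (G x) (F z)" by (simp add: op_eq)
    hence "vadd p (vneg p (G x)) (vadd p (G x) (F y)) = vadd p (vneg p (G x)) (vadd p (G x) (F z))" by simp
    hence "vadd p (vadd p (vneg p (G x)) (G x)) (F y) = vadd p (vadd p (vneg p (G x)) (G x)) (F z)" by (simp only: vadd_assoc)
    hence "F y = F z" by simp
    thus "y = z" using F_inj y z by blast
  qed
  have fin: "finite Q" by (rule finQ)
  have "opr x ` Q \<subseteq> Q" by auto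
  with inj fin have "opr x ` Q = Q" by (simp add: endo_inj_surj)
  thus ?thesis using inj by (intro bij_betw_imageI)
qed

lemma connected: "quandle_connected Q opr"
  unfolding quandle_connected_def Let_def
proof (intro ballI)
  fix y z assume y: "y \<in> Q" and z: "z \<in> Q"
  have "vadd p z (vneg p (F y)) \<in> Q" by (rule vadd_Q)
  from G_surj[OF this] obtain x where x: "x \<in> Q" "G x = vadd p z (vneg p (F y))" by blast
  have "opr x y = vadd p (vadd p z (vneg p (F y))) (F y)" using x by (simp add: op_eq)
  also have "\<dots> = z" using z by (rule vadd_cancel)
  finally have xy: "opr x y = z" .
  let ?R = "{(y, opr x y) |x y. x \<in> Q \<and> y \<in> Q}"
  have "(y, z) \<in> ?R" using x y xy by blast
  hence "(y, z) \<in> ?R \<union> ?R\<inverse>" by (rule UnI1)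
  thus "(y, z) \<in> (?R \<union> ?R\<inverse>)\<^sup>*" by (rule r_into_rtrancl)
qed

end


typedef 'a bij = "{f :: 'a \<Rightarrow> 'a. bij f}" morphisms rb ab
  by (rule exI[of _ id]) simp

lemma rb_bij: "bij (rb w)" using rb by blast
lemma rb_ab: "bij f \<Longrightarrow> rb (ab f) = f" by (simp add: ab_inverse)

instantiation bij :: (type) group_add
begin
definition zero_bij where "0 = ab id"
definition plus_bij where "x + y = ab (rb x \<circ> rb y)"
definition uminus_bij where "- x = ab (inv (rb x))"
definition minus_bij where "x - y = ab (rb x \<circ> inv (rb y))"

lemma rb_zero: "rb 0 = id" by (simp add: zero_bij_def rb_ab)
lemma rb_plus: "rb (x + y) = rb x \<circ> rb y" by (simp add: plus_bij_def rb_ab bij_comp rb_bij)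
lemma rb_uminus: "rb (- x) = inv (rb x)" by (simp add: uminus_bij_def rb_ab bij_imp_bij_inv rb_bij)
lemma rb_minus: "rb (x - y) = rb x \<circ> inv (rb y)" by (simp add: minus_bij_def rb_ab bij_imp_bij_inv rb_bij bij_comp)

instance
proof
  fix a b c :: "'a bij"
  show "a + b + c = a + (b + c)" by (simp add: rb_inject[symmetric] rb_plus o_assoc)
  show "0 + a = a" by (simp add: rb_inject[symmetric] rb_plus rb_zero)
  show "a + 0 = a" by (simp add: rb_inject[symmetric] rb_plus rb_zero)
  show "- a + a = 0" by (simp add: rb_inject[symmetric] rb_plus rb_zero rb_uminus bij_is_inj rb_bij)
  show "a + - b = a - b" by (simp add: rb_inject[symmetric] rb_plus rb_minus rb_uminus)
qed
end

lemma act_plus: "rb (x + y) v = rb x (rb y v)" by (simp add: rb_plus)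
lemma act_uminus: "rb x u = v \<Longrightarrow> rb (- x) v = u"
  by (metis rb_uminus rb_bij bij_inv_eq_iff)

primrec pw :: "nat \<Rightarrow> 'g::group_add \<Rightarrow> 'g" where
  "pw 0 w = 0" | "pw (Suc n) w = w + pw n w"

lemma pw_comm: "w + pw n w = pw n w + w"
  by (induction n) (simp_all add: add.assoc[symmetric])
lemma pw_add: "pw (m + n) w = pw m w + pw n w"
  by (induction m) (simp_all add: add.assoc)
lemma pw_zero[simp]: "pw n 0 = 0" by (induction n) simp_all
lemma pw_mult: "pw (m * n) w = pw m (pw n w)"
  by (induction m) (simp_all add: pw_add)
lemma pw_comm2: "w + v = v + w \<Longrightarrow> v + pw n w = pw n w + v"
proof (induction n)
  case 0 show ?case by simp
next
  case (Suc n)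
  have "v + (w + pw n w) = (v + w) + pw n w" by (simp add: add.assoc)
  also have "\<dots> = w + (v + pw n w)" using Suc.prems by (metis add.assoc)
  also have "\<dots> = w + pw n w + v" using Suc.IH Suc.prems by (simp add: add.assoc)
  finally show ?case by simp
qed
lemma pw_distrib: "w + v = v + w \<Longrightarrow> pw n (w + v) = pw n w + pw n v"
proof (induction n)
  case 0 then show ?case by simp
next
  case (Suc n)
  have c1: "v + pw n w = pw n w + v" using pw_comm2 Suc.prems by blast
  have "pw (Suc n) (w + v) = w + v + (pw n w + pw n v)" using Suc by simp
  also have "\<dots> = w + (v + pw n w) + pw n v" by (simp add: add.assoc)
  also have "\<dots> = w + (pw n w + v) + pw n v" using c1 by simp
  finally show ?case by (simp add: add.assoc)
qed
lemma pw_neg: "pw n (- w) = - pw n w"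
proof (induction n)
  case 0 then show ?case by simp
next
  case (Suc n)
  have "pw (Suc n) (- w) = - w + - pw n w" using Suc by simp
  also have "\<dots> = - (pw n w + w)" by (simp add: minus_add)
  also have "\<dots> = - pw (Suc n) w" by (simp add: pw_comm)
  finally show ?case .
qed




declare add_uminus_conv_diff[simp del]

lemma gl1: "u + v = w + u \<Longrightarrow> - u + w = v + - (u::'g::group_add)"
proof -
  assume h: "u + v = w + u"
  have "- u + w = - u + (w + u) + - u" by (simp add: add.assoc)
  also have "\<dots> = - u + (u + v) + - u" using h by simp
  also have "\<dots> = v + - u" by simp
  finally show ?thesis .
qed
lemma gl2: "w + u = v \<Longrightarrow> w = v + - (u::'g::group_add)"
  by (metis add_minus_cancel add.assoc add.right_neutral right_minus)
lemma cm_neg: "w + u = u + w \<Longrightarrow> w + - u = - u + (w::'g::group_add)"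
proof -
  assume h: "w + u = u + w"
  have "- u + w = - u + (w + u) + - u" by (simp add: add.assoc)
  also have "\<dots> = - u + (u + w) + - u" using h by simp
  also have "\<dots> = w + - u" by simp
  finally show ?thesis by simp
qed
lemma cm_add: "w + u = u + w \<Longrightarrow> w + v = v + w \<Longrightarrow> w + (u + v) = (u + v) + (w::'g::group_add)"
  by (metis add.assoc)
lemma conj_add: "g + (u + v) + - g = (g + u + - g) + (g + v + - (g::'g::group_add))"
  by (simp add: add.assoc)

locale ncoc = affq p ma mb mc md for p ma mb mc md +
  fixes S :: "'s set" and th :: "int \<times> int \<Rightarrow> int \<times> int \<Rightarrow> 's \<Rightarrow> 's"
  assumes coc: "quandle_cocycle (Zp2 p) (aff_op p (ma, mb, mc, md)) S th"
    and nrm: "\<forall>x\<in>Zp2 p. th x (0, 0) = id"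
begin

lemma th_perm: "x \<in> Q \<Longrightarrow> y \<in> Q \<Longrightarrow> th x y permutes S"
  using coc by (simp add: quandle_cocycle_def)
lemma th_coc: "x \<in> Q \<Longrightarrow> y \<in> Q \<Longrightarrow> z \<in> Q \<Longrightarrow>
   th (opr x y) (opr x z) \<circ> th x z = th x (opr y z) \<circ> th y z"
  using coc by (simp add: quandle_cocycle_def)
lemma th_diag: "x \<in> Q \<Longrightarrow> th x x = id"
  using coc by (simp add: quandle_cocycle_def)
lemma th_bij: "x \<in> Q \<Longrightarrow> y \<in> Q \<Longrightarrow> bij (th x y)"
  using th_perm permutes_bij by blast

definition EE :: "int \<times> int \<Rightarrow> (int \<times> int) \<times> 's \<Rightarrow> (int \<times> int) \<times> 's" where
  "EE x = (\<lambda>(y, s). if y \<in> Q then (opr x y, th x y s) else (y, s))"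

lemma EE_in: "y \<in> Q \<Longrightarrow> EE x (y, s) = (opr x y, th x y s)" by (simp add: EE_def)
lemma EE_out: "y \<notin> Q \<Longrightarrow> EE x (y, s) = (y, s)" by (simp add: EE_def)

lemma EE_bij: assumes x: "x \<in> Q" shows "bij (EE x)"
proof -
  have Lb: "bij_betw (opr x) Q Q" using L_bij x by blast
  have "inj (EE x)"
  proof (rule injI)
    fix u v assume eq: "EE x u = EE x v"
    obtain y s where u: "u = (y, s)" by (cases u)
    obtain y' s' where v: "v = (y', s')" by (cases v)
    show "u = v"
    proof (cases "y \<in> Q"; cases "y' \<in> Q")
      assume y: "y \<in> Q" and y': "y' \<in> Q"
      from eq have "opr x y = opr x y'" and t: "th x y s = th x y' s'" by (simp_all add: u v EE_in y y')
      hence yy: "y = y'" using Lb y y' by (meson bij_betw_imp_inj_on inj_onD)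
      hence "s = s'" using t th_bij[OF x y] by (simp add: bij_is_inj inj_eq)
      thus ?thesis using yy u v by simp
    next
      assume y: "y \<in> Q" and y': "y' \<notin> Q"
      from eq have "opr x y = y'" by (simp add: u v EE_in EE_out y y')
      thus ?thesis using y' op_Q by metis
    next
      assume y: "y \<notin> Q" and y': "y' \<in> Q"
      from eq have "y = opr x y'" by (simp add: u v EE_in EE_out y y')
      thus ?thesis using y op_Q by metis
    next
      assume y: "y \<notin> Q" and y': "y' \<notin> Q"
      from eq show ?thesis by (simp add: u v EE_out y y')
    qed
  qed
  moreover have "\<exists>u. v = EE x u" for v
  proof -
    obtain z s where v: "v = (z, s)" by (cases v)
    show ?thesis
    proof (cases "z \<in> Q")
      case True
      let ?y = "inv_into Q (opr x) z"
      have zi: "z \<in> opr x ` Q" using Lb True by (simp add: bij_betw_imp_surj_on)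
      have y: "?y \<in> Q" using inv_into_into[OF zi] .
      have yz: "opr x ?y = z" using f_inv_into_f[OF zi] .
      have "th x ?y (inv (th x ?y) s) = s" using th_bij[OF x y] by (meson bij_inv_eq_iff)
      hence "v = EE x (?y, inv (th x ?y) s)" using True y yz by (simp add: v EE_in)
      thus ?thesis by (rule exI)
    next
      case False
      hence "v = EE x v" by (simp add: v EE_out)
      thus ?thesis by (rule exI)
    qed
  qed
  hence "surj (EE x)" unfolding surj_def by (rule allI)
  ultimately show ?thesis unfolding bij_def by (rule conjI)
qed

definition e :: "int \<times> int \<Rightarrow> ((int \<times> int) \<times> 's) bij" where "e x = ab (EE x)"

lemma rb_e: "x \<in> Q \<Longrightarrow> rb (e x) = EE x" by (simp add: e_def rb_ab EE_bij)

lemma e_rel: assumes x: "x \<in> Q" and y: "y \<in> Q" shows "e x + e y = e (opr x y) + e x"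
proof -
  have "rb (e x + e y) = rb (e (opr x y) + e x)"
  proof
    fix v :: "(int \<times> int) \<times> 's"
    obtain z s where v: "v = (z, s)" by (cases v)
    show "rb (e x + e y) v = rb (e (opr x y) + e x) v"
    proof (cases "z \<in> Q")
      case True
      have "th x (opr y z) (th y z s) = th (opr x y) (opr x z) (th x z s)"
        using th_coc[OF x y True] by (metis comp_apply)
      moreover have "opr x (opr y z) = opr (opr x y) (opr x z)" by (rule op_dist)
      ultimately show ?thesis using True x y by (simp add: v act_plus rb_e EE_in)
    next
      case False thus ?thesis using x y by (simp add: v act_plus rb_e EE_out)
    qed
  qed
  thus ?thesis by (simp add: rb_inject)
qed

abbreviation "e0 \<equiv> e vo"
definition a where "a x = e x + - e0"
definition k where "k x y = a x + a y + - a (vadd p x y)"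
definition c where "c x y = a x + a y + - a x + - a y"
definition central where "central w \<longleftrightarrow> (\<forall>z\<in>Q. w + e z = e z + w)"

lemma e0_rel: "y \<in> Q \<Longrightarrow> e0 + e y = e (F y) + e0"
  using e_rel[of vo y] by (simp add: op_o2)
lemma eG_rel: "x \<in> Q \<Longrightarrow> e x + e0 = e (G x) + e x"
  using e_rel[of x vo] by (simp add: op_o)

lemma conj_a: assumes x: "x \<in> Q" and z: "z \<in> Q" shows "a x + e z = e (vadd p z (G x)) + a x"
proof -
  obtain z' where z': "z' \<in> Q" "F z' = z" using F_surj[OF z] by blast
  have h: "- e0 + e z = e z' + - e0" using e0_rel[OF z'(1)] z' by (intro gl1) simp
  have "a x + e z = e x + (- e0 + e z)" by (simp add: a_def add.assoc)
  also have "\<dots> = (e x + e z') + - e0" using h by (simp add: add.assoc)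
  also have "\<dots> = e (opr x z') + e x + - e0" using e_rel[OF x z'(1)] by simp
  finally have h2: "a x + e z = e (opr x z') + a x" by (simp add: a_def add.assoc)
  have "opr x z' = vadd p z (G x)" using z' by (simp add: op_eq vadd_comm)
  thus ?thesis using h2 by simp
qed

lemma conj_a_inv: assumes x: "x \<in> Q" and z: "z \<in> Q" shows "- a x + e z = e (vadd p z (vneg p (G x))) + - a x"
proof -
  have "a x + e (vadd p z (vneg p (G x))) = e (vadd p (vadd p z (vneg p (G x))) (G x)) + a x"
    using conj_a[OF x] by simp
  also have "vadd p (vadd p z (vneg p (G x))) (G x) = z" using z by (rule vadd_cancel)
  finally show ?thesis by (intro gl1)
qed


lemma vk: assumes "x \<in> Q" "y \<in> Q" "z \<in> Q"
  shows "vadd p (vadd p (vadd p z (vneg p (G (vadd p x y)))) (G y)) (G x) = z"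
proof -
  have "vadd p (vadd p (vadd p z (vneg p (G (vadd p x y)))) (G y)) (G x)
     = vadd p z (vadd p (vneg p (vadd p (G x) (G y))) (vadd p (G x) (G y)))"
    by (simp add: G_add vadd_assoc vadd_comm[of "G y" "G x"])
  also have "\<dots> = z" using assms by simp
  finally show ?thesis .
qed

lemma central_k: assumes x: "x \<in> Q" and y: "y \<in> Q" shows "central (k x y)"
  unfolding central_def
proof
  fix z assume z: "z \<in> Q"
  let ?s = "vadd p x y"
  let ?z0 = "vadd p z (vneg p (G ?s))"
  let ?z1 = "vadd p ?z0 (G y)"
  have s: "?s \<in> Q" by simp
  have "k x y + e z = a x + (a y + (- a ?s + e z))" unfolding k_def by (simp only: add.assoc)
  also have "\<dots> = a x + (a y + (e ?z0 + - a ?s))" using conj_a_inv[OF s z] by simp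
  also have "\<dots> = a x + ((a y + e ?z0) + - a ?s)" by (simp add: add.assoc)
  also have "\<dots> = a x + ((e ?z1 + a y) + - a ?s)" using conj_a[OF y, of ?z0] by simp
  also have "\<dots> = (a x + e ?z1) + (a y + - a ?s)" by (simp add: add.assoc)
  also have "\<dots> = (e (vadd p ?z1 (G x)) + a x) + (a y + - a ?s)" using conj_a[OF x, of ?z1] by simp
  also have "\<dots> = (e z + a x) + (a y + - a ?s)" using vk[OF x y z] by simp
  finally show "k x y + e z = e z + k x y" by (simp add: k_def add.assoc)
qed

lemma central_e: "central w \<Longrightarrow> z \<in> Q \<Longrightarrow> w + e z = e z + w" by (simp add: central_def)
lemma central_a: "central w \<Longrightarrow> x \<in> Q \<Longrightarrow> w + a x = a x + w"
  unfolding a_def by (intro cm_add cm_neg) (simp_all add: central_def)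
lemma central_na: "central w \<Longrightarrow> x \<in> Q \<Longrightarrow> w + - a x = - a x + w"
  by (intro cm_neg central_a)
lemma central_neg: "central w \<Longrightarrow> central (- w)"
  unfolding central_def
proof
  fix z assume h: "\<forall>z\<in>Q. w + e z = e z + w" and z: "z \<in> Q"
  have "e z + w = w + e z" using h z by simp
  hence "e z + - w = - w + e z" by (rule cm_neg)
  thus "- w + e z = e z + - w" by simp
qed
lemma central_plus: "central w \<Longrightarrow> central v \<Longrightarrow> central (w + v)"
  unfolding central_def
proof
  fix z assume h: "\<forall>z\<in>Q. w + e z = e z + w" and h2: "\<forall>z\<in>Q. v + e z = e z + v" and z: "z \<in> Q"
  have 1: "w + e z = e z + w" using h z by simp
  have 2: "v + e z = e z + v" using h2 z by simp
  have "w + v + e z = w + (v + e z)" by (simp add: add.assoc)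
  also have "\<dots> = (w + e z) + v" using 2 by (simp add: add.assoc)
  also have "\<dots> = e z + (w + v)" using 1 by (simp add: add.assoc)
  finally show "w + v + e z = e z + (w + v)" .
qed
lemma central_e0: "central w \<Longrightarrow> w + e0 = e0 + w" by (simp add: central_def)
lemma central_ne0: "central w \<Longrightarrow> w + - e0 = - e0 + w" by (intro cm_neg central_e0)
lemma central_k2: "central w \<Longrightarrow> x \<in> Q \<Longrightarrow> y \<in> Q \<Longrightarrow> w + k x y = k x y + w"
  unfolding k_def by (intro cm_add central_a central_na) simp_all
lemma central_c2: "central w \<Longrightarrow> x \<in> Q \<Longrightarrow> y \<in> Q \<Longrightarrow> w + c x y = c x y + w"
  unfolding c_def by (intro cm_add central_a central_na) simp_all

lemma A1: assumes x: "x \<in> Q" and y: "y \<in> Q"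
  shows "a x + a (F y) + - a x = a (opr x y) + - a (G x)"
proof -
  have h1: "- e0 + e (F y) = e y + - e0" using e0_rel[OF y] by (intro gl1) simp
  have h2: "e (opr x y) = e x + e y + - e x" using e_rel[OF x y] by (intro gl2) simp
  have h3: "e (G x) = e x + e0 + - e x" using eG_rel[OF x] by (intro gl2) simp
  have "a x + a (F y) + - a x = e x + (- e0 + e (F y)) + - e x"
    by (simp add: a_def add.assoc minus_add)
  also have "\<dots> = e x + e y + - e0 + - e x" using h1 by (simp add: add.assoc)
  finally have l: "a x + a (F y) + - a x = e x + e y + - e0 + - e x" .
  have "a (opr x y) + - a (G x) = e (opr x y) + - e (G x)"
    by (simp add: a_def add.assoc minus_add)
  also have "\<dots> = e x + e y + - e0 + - e x" using h2 h3 by (simp add: add.assoc minus_add)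
  finally show ?thesis using l by simp
qed

lemma A2: assumes x: "x \<in> Q" shows "e0 + a x + - e0 = a (F x)"
proof -
  have "e0 + e x = e (F x) + e0" using e0_rel[OF x] .
  hence "e0 + e x + - e0 + - e0 = e (F x) + e0 + - e0 + - e0" by simp
  thus ?thesis by (simp add: a_def add.assoc)
qed

lemma a_vo: "a vo = 0" by (simp add: a_def)

lemma c_k: assumes "x \<in> Q" "y \<in> Q" shows "c x y = k x y + - k y x"
  by (simp add: c_def k_def vadd_comm[of y x] add.assoc minus_add)

lemma central_c: assumes "x \<in> Q" "y \<in> Q" shows "central (c x y)"
  using assms by (simp add: c_k central_plus central_neg central_k)

lemma c_anti: "c y x = - c x y" by (simp add: c_def add.assoc minus_add)
lemma c_self: "c x x = 0" by (simp add: c_def add.assoc)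
lemma c_vo1: "c vo y = 0" by (simp add: c_def a_vo)
lemma c_vo2: "c x vo = 0" by (simp add: c_def a_vo)

lemma K1: assumes x: "x \<in> Q" and y: "y \<in> Q" shows "c x (F y) = - k (F y) (G x)"
proof -
  let ?s = "vadd p (F y) (G x)"
  have os: "opr x y = ?s" by (simp add: op_eq vadd_comm)
  have "a ?s = - k (F y) (G x) + (a (F y) + a (G x))"
    by (simp add: k_def add.assoc minus_add)
  hence "a x + a (F y) + - a x = - k (F y) (G x) + a (F y)"
    using A1[OF x y] os by (simp add: add.assoc)
  thus ?thesis by (simp add: c_def add.assoc)
qed

lemma K2: assumes x: "x \<in> Q" and y: "y \<in> Q" shows "k (F x) (F y) = k x y"
proof -
  have cen: "central (k x y)" using central_k[OF x y] .
  have "e0 + k x y = k x y + e0" using central_e0[OF cen] by simp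
  hence h1: "e0 + k x y + - e0 = k x y" by (metis add.assoc add.right_neutral right_minus)
  have h2: "e0 + k x y + - e0 = (e0 + a x + - e0) + (e0 + a y + - e0) + - (e0 + a (vadd p x y) + - e0)"
    unfolding k_def by (simp add: add.assoc minus_add)
  have h3: "e0 + a (vadd p x y) + - e0 = a (vadd p (F x) (F y))" using A2[of "vadd p x y"] by (simp add: F_add)
  have "k x y = a (F x) + a (F y) + - a (vadd p (F x) (F y))"
    using h1 h2 h3 A2[OF x] A2[OF y] by simp
  thus ?thesis unfolding k_def by simp
qed

lemma c_F: assumes x: "x \<in> Q" and y: "y \<in> Q" shows "c (F x) (F y) = c x y"
  using assms by (simp add: c_k K2)
lemma conj_central: assumes "central w" "x \<in> Q" shows "a x + w + - a x = w"
proof -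
  have "w + a x = a x + w" using central_a assms by blast
  hence "a x + w = w + a x" by simp
  thus ?thesis by (simp add: add.assoc)
qed

lemma aya: "a x + a y + - a x = c x y + a y" by (simp add: c_def add.assoc)

lemma cbil2: assumes x: "x \<in> Q" and y: "y \<in> Q" and z: "z \<in> Q"
  shows "c x (vadd p y z) = c x y + c x z"
proof -
  let ?s = "vadd p y z"
  let ?k = "k y z"
  have ck: "central (- ?k)" using central_neg central_k y z by blast
  have h0: "a ?s = - ?k + (a y + a z)" by (simp add: k_def add.assoc minus_add)
  have "a x + a ?s + - a x = (a x + - ?k + - a x) + (a x + (a y + a z) + - a x)"
    unfolding h0 by (rule conj_add)
  also have "a x + - ?k + - a x = - ?k" using conj_central[OF ck x] .
  also have "a x + (a y + a z) + - a x = (a x + a y + - a x) + (a x + a z + - a x)" by (rule conj_add)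
  also have "\<dots> = (c x y + a y) + (c x z + a z)" by (simp add: aya)
  also have "\<dots> = c x y + ((a y + c x z) + a z)" by (simp add: add.assoc)
  also have "a y + c x z = c x z + a y" using central_a[OF central_c[OF x z] y] by simp
  also have "- ?k + (c x y + (c x z + a y + a z)) = (- ?k + c x y) + (c x z + a y + a z)" by (simp add: add.assoc)
  also have "- ?k + c x y = c x y + - ?k" using central_c2[OF ck x y] .
  also have "c x y + - ?k + (c x z + a y + a z) = c x y + ((- ?k + c x z) + (a y + a z))" by (simp add: add.assoc)
  also have "- ?k + c x z = c x z + - ?k" using central_c2[OF ck x z] .
  also have "c x y + (c x z + - ?k + (a y + a z)) = c x y + c x z + a ?s" by (simp add: h0 add.assoc)
  finally have "a x + a ?s + - a x = c x y + c x z + a ?s" .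
  thus ?thesis by (simp add: c_def add.assoc)
qed

lemma cbil1: assumes x: "x \<in> Q" and y: "y \<in> Q" and z: "z \<in> Q"
  shows "c (vadd p x y) z = c x z + c y z"
proof -
  have "c (vadd p x y) z = - c z (vadd p x y)" by (simp add: c_anti[of z])
  also have "\<dots> = - (c z x + c z y)" using cbil2[OF z x y] by simp
  also have "\<dots> = c y z + c x z" by (simp add: minus_add c_anti[of _ z])
  also have "\<dots> = c x z + c y z" using central_c2[OF central_c[OF y z] x z] .
  finally show ?thesis .
qed

lemma c_smul1: assumes x: "x \<in> Q" and y: "y \<in> Q" shows "c (smul p n x) y = pw n (c x y)"
proof (induction n)
  case 0 show ?case by (simp add: smul_0 c_vo1)
next
  case (Suc n)
  have "c (smul p (Suc n) x) y = c x y + c (smul p n x) y"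
    unfolding smul_Suc using cbil1[OF x _ y] by simp
  thus ?case using Suc by simp
qed

lemma c_smul2: assumes x: "x \<in> Q" and y: "y \<in> Q" shows "c x (smul p n y) = pw n (c x y)"
proof (induction n)
  case 0 show ?case by (simp add: smul_0 c_vo2)
next
  case (Suc n)
  have "c x (smul p (Suc n) y) = c x y + c x (smul p n y)"
    unfolding smul_Suc using cbil2[OF x y] by simp
  thus ?case using Suc by simp
qed

lemma c_formula: assumes u: "u \<in> Q" and v: "v \<in> Q"
  shows "c u v = pw (nat (fst u) * nat (snd v)) (c e1 e2) + - pw (nat (snd u) * nat (fst v)) (c e1 e2)"
proof -
  define n1 where "n1 = nat (fst u)"
  define n2 where "n2 = nat (snd u)"
  define m1 where "m1 = nat (fst v)"
  define m2 where "m2 = nat (snd v)"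
  have hu: "u = vadd p (smul p n1 e1) (smul p n2 e2)" unfolding n1_def n2_def by (rule decomp[OF u])
  have hv: "v = vadd p (smul p m1 e1) (smul p m2 e2)" unfolding m1_def m2_def by (rule decomp[OF v])
  have ce1: "c e1 v = pw m2 (c e1 e2)"
  proof -
    have "c e1 v = c e1 (smul p m1 e1) + c e1 (smul p m2 e2)" unfolding hv by (rule cbil2) simp_all
    thus ?thesis by (simp add: c_smul2 c_self)
  qed
  have ce2: "c e2 v = pw m1 (- c e1 e2)"
  proof -
    have "c e2 v = c e2 (smul p m1 e1) + c e2 (smul p m2 e2)" unfolding hv by (rule cbil2) simp_all
    thus ?thesis by (simp add: c_smul2 c_self c_anti[of e2 e1])
  qed
  have "c u v = c (smul p n1 e1) v + c (smul p n2 e2) v" unfolding hu using v by (intro cbil1) simp_all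
  also have "\<dots> = pw n1 (c e1 v) + pw n2 (c e2 v)" using v by (simp add: c_smul1)
  also have "\<dots> = pw (n1 * m2) (c e1 e2) + - pw (n2 * m1) (c e1 e2)"
    by (simp add: ce1 ce2 pw_mult pw_neg)
  finally show ?thesis unfolding n1_def n2_def m1_def m2_def .
qed
end


lemma pw_mod: assumes "pw P (w::'g::group_add) = 0" shows "pw n w = pw (n mod P) w"
proof -
  have "pw n w = pw (n div P * P + n mod P) w" by simp
  also have "\<dots> = pw (n div P) (pw P w) + pw (n mod P) w" by (simp only: pw_add pw_mult)
  finally show ?thesis using assms by simp
qed

lemma pw_one: "pw (Suc 0) w = w" by simp

lemma pw_kill_lt: assumes P: "prime P" and z: "pw P (w::'g::group_add) = 0" and ij: "i < j" "j < P"
  and eq: "pw i w = pw j w" shows "w = 0"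
proof -
  define t where "t = j - i"
  have t: "0 < t" "t < P" using ij by (auto simp: t_def)
  have "pw j w = pw i w + pw t w" using ij by (simp add: t_def pw_add[symmetric])
  hence "pw i w + pw t w = pw i w + 0" using eq by simp
  hence t0: "pw t w = 0" by (simp only: add_left_cancel)
  have nd: "\<not> P dvd t" using t by (auto dest: dvd_imp_le)
  have "coprime P t" using P nd by (rule prime_imp_coprime)
  hence "coprime t P" by (simp add: coprime_commute)
  then obtain s where s: "[t * s = Suc 0] (mod P)" using cong_solve_coprime_nat by blast
  have P1: "P > 1" using P prime_gt_1_nat by blast
  have "(s * t) mod P = Suc 0" using s P1 by (simp add: cong_def mult.commute)
  have "pw (s * t) w = pw s (pw t w)" by (rule pw_mult)
  also have "\<dots> = 0" using t0 by simp
  finally have "pw (s * t) w = 0" .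
  moreover have "pw (s * t) w = pw ((s * t) mod P) w" using pw_mod[OF z] .
  ultimately show ?thesis using \<open>(s * t) mod P = Suc 0\<close> by simp
qed

lemma pw_kill: assumes P: "prime P" and z: "pw P (w::'g::group_add) = 0" and ij: "i \<noteq> j" "i < P" "j < P"
  and eq: "pw i w = pw j w" shows "w = 0"
proof (cases "i < j")
  case True thus ?thesis using pw_kill_lt[OF P z True ij(3) eq] by blast
next
  case False hence "j < i" using ij by simp
  thus ?thesis using pw_kill_lt[OF P z _ ij(2)] eq by simp
qed

lemma gl3: "w + - u = v \<Longrightarrow> w = v + (u::'g::group_add)"
proof -
  assume h: "w + - u = v"
  have "w = w + - u + u" by (simp add: add.assoc)
  thus ?thesis using h by simp
qed

context ncoc begin

lemma kappa0: assumes det: "(ma * md - mb * mc) mod p \<noteq> 1" shows "c e1 e2 = 0"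
proof -
  define P where "P = nat p"
  have pP: "int P = p" using p_pos by (simp add: P_def)
  have Pr: "prime P" using pr by (simp add: P_def)
  define A where "A = nat (ma mod p) * nat (md mod p)"
  define B where "B = nat (mc mod p) * nat (mb mod p)"
  have F1: "F e1 = (ma mod p, mc mod p)" by (simp add: mat_apply_def)
  have F2: "F e2 = (mb mod p, md mod p)" by (simp add: mat_apply_def)
  have "c e1 e2 = c (F e1) (F e2)" using c_F by simp
  also have "\<dots> = pw A (c e1 e2) + - pw B (c e1 e2)"
    using c_formula[of "F e1" "F e2"] by (simp add: F1 F2 A_def B_def modQ)
  finally have h: "c e1 e2 = pw A (c e1 e2) + - pw B (c e1 e2)" .
  have h2: "pw (Suc B) (c e1 e2) = pw A (c e1 e2)"
  proof -
    have "pw (Suc B) (c e1 e2) = c e1 e2 + pw B (c e1 e2)" by simp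
    also have "\<dots> = pw A (c e1 e2) + - pw B (c e1 e2) + pw B (c e1 e2)" using h by simp
    also have "\<dots> = pw A (c e1 e2)" by (simp add: add.assoc)
    finally show ?thesis .
  qed
  have z: "pw P (c e1 e2) = 0"
    using c_smul1[of e1 e2 P] smul_p c_vo1 by (simp add: P_def)
  have neq: "Suc B mod P \<noteq> A mod P"
  proof
    assume "Suc B mod P = A mod P"
    hence "int (Suc B mod P) = int (A mod P)" by simp
    hence "(1 + (mc mod p) * (mb mod p)) mod p = ((ma mod p) * (md mod p)) mod p"
      using p_pos by (simp add: zmod_int pP A_def B_def)
    moreover have "(1 + (mc mod p) * (mb mod p)) mod p = (1 + mc * mb) mod p"
      by (rule cong_norm, (rule cstrip)+, simp)
    moreover have "((ma mod p) * (md mod p)) mod p = (ma * md) mod p"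
      by (rule cong_norm, (rule cstrip)+, simp)
    ultimately have "[1 + mc * mb = ma * md] (mod p)" by (simp add: cong_def)
    hence "[ma * md - mb * mc = 1 + mc * mb - mb * mc] (mod p)"
      by (intro cong_diff cong_refl) (simp add: cong_sym)
    hence "(ma * md - mb * mc) mod p = 1 mod p" by (simp add: cong_def algebra_simps)
    thus False using det p_gt1 by simp
  qed
  have "pw (Suc B mod P) (c e1 e2) = pw (A mod P) (c e1 e2)"
    using h2 pw_mod[OF z, of "Suc B"] pw_mod[OF z, of A] by simp
  moreover have "P > 0" using Pr prime_gt_0_nat by blast
  ultimately show ?thesis using pw_kill[OF Pr z neq] by simp
qed

lemma c_zero: assumes det: "(ma * md - mb * mc) mod p \<noteq> 1" and u: "u \<in> Q" and v: "v \<in> Q"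
  shows "c u v = 0"
  using c_formula[OF u v] kappa0[OF det] by simp

lemma k_zero: assumes det: "(ma * md - mb * mc) mod p \<noteq> 1" and u: "u \<in> Q" and v: "v \<in> Q"
  shows "k u v = 0"
proof -
  obtain y where y: "y \<in> Q" "F y = u" using F_surj[OF u] by blast
  obtain x where x: "x \<in> Q" "G x = v" using G_surj[OF v] by blast
  have "c x (F y) = - k (F y) (G x)" using K1[OF x(1) y(1)] .
  moreover have "c x (F y) = 0" using c_zero[OF det x(1)] by simp
  ultimately have "- k u v = 0" using y x by simp
  thus ?thesis by simp
qed

lemma a_add: assumes det: "(ma * md - mb * mc) mod p \<noteq> 1" and x: "x \<in> Q" and y: "y \<in> Q"
  shows "a x + a y = a (vadd p x y)"
proof -
  have h: "a x + a y + - a (vadd p x y) = 0" using k_zero[OF det x y] by (simp add: k_def)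
  have "a x + a y = (a x + a y + - a (vadd p x y)) + a (vadd p x y)" by (simp add: add.assoc)
  also have "\<dots> = a (vadd p x y)" using h by simp
  finally show ?thesis .
qed

lemma rb_e0_vo: "rb e0 (vo, s) = (vo, s)"
  by (simp add: rb_e EE_in op_idem th_diag)

lemma rb_a_vo: assumes x: "x \<in> Q" shows "rb (a x) (vo, s) = (G x, s)"
proof -
  have "rb (- e0) (vo, s) = (vo, s)" using rb_e0_vo by (rule act_uminus)
  thus ?thesis using x nrm by (simp add: a_def act_plus rb_e EE_in op_o)
qed

lemma rb_a: assumes det: "(ma * md - mb * mc) mod p \<noteq> 1" and x: "x \<in> Q" and z: "z \<in> Q"
  shows "rb (a x) (z, s) = (vadd p z (G x), s)"
proof -
  obtain w where w: "w \<in> Q" "G w = z" using G_surj[OF z] by blast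
  have "rb (a x) (z, s) = rb (a x) (rb (a w) (vo, s))" using rb_a_vo[OF w(1)] w by simp
  also have "\<dots> = rb (a x + a w) (vo, s)" by (simp add: act_plus)
  also have "\<dots> = rb (a (vadd p x w)) (vo, s)" using a_add[OF det x w(1)] by simp
  also have "\<dots> = (G (vadd p x w), s)" using rb_a_vo by simp
  also have "\<dots> = (vadd p z (G x), s)" using w by (simp add: G_add vadd_comm)
  finally show ?thesis .
qed

lemma th0: assumes det: "(ma * md - mb * mc) mod p \<noteq> 1" and z: "z \<in> Q" shows "th vo z = id"
proof
  fix s
  obtain x where x: "x \<in> Q" "G x = z" using G_surj[OF z] by blast
  have "e0 + a x + - e0 = a (F x)" using A2[OF x(1)] .
  hence eq: "e0 + a x = a (F x) + e0" by (rule gl3)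
  have "rb (e0 + a x) (vo, s) = rb e0 (z, s)" using x rb_a_vo by (simp add: act_plus)
  also have "\<dots> = (opr vo z, th vo z s)" using z by (simp add: rb_e EE_in)
  finally have l: "rb (e0 + a x) (vo, s) = (opr vo z, th vo z s)" .
  have "rb (a (F x) + e0) (vo, s) = (G (F x), s)" using rb_e0_vo rb_a_vo by (simp add: act_plus)
  with l eq show "th vo z s = id s" by simp
qed

theorem th_id: assumes det: "(ma * md - mb * mc) mod p \<noteq> 1" and x: "x \<in> Q" and y: "y \<in> Q"
  shows "th x y = id"
proof
  fix s
  have ex: "e x = a x + e0" by (simp add: a_def add.assoc)
  have "rb (e x) (y, s) = rb (a x) (rb e0 (y, s))" by (simp add: ex act_plus)
  also have "\<dots> = rb (a x) (F y, s)" using y th0[OF det y] by (simp add: rb_e EE_in op_o2)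
  also have "\<dots> = (vadd p (F y) (G x), s)" using rb_a[OF det x] by simp
  finally have "rb (e x) (y, s) = (vadd p (F y) (G x), s)" .
  thus "th x y s = id s" using x y by (simp add: rb_e EE_in)
qed
end


locale tauloc =
  fixes pp :: int and sg :: "nat \<Rightarrow> 's" and S :: "'s set"
  assumes ppos: "pp > 0" and bs: "bij_betw sg {0..<nat pp} S"
begin

definition idx where "idx s = inv_into {0..<nat pp} sg s"
definition tau :: "int \<Rightarrow> 's \<Rightarrow> 's" where
  "tau t s = (if s \<in> S then sg (nat ((int (idx s) + t) mod pp)) else s)"

lemma idx_in: "s \<in> S \<Longrightarrow> idx s < nat pp \<and> sg (idx s) = s"
proof -
  assume s: "s \<in> S"
  have si: "s \<in> sg ` {0..<nat pp}" using bs s by (simp add: bij_betw_def)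
  show ?thesis unfolding idx_def using inv_into_into[OF si] f_inv_into_f[OF si] by simp
qed

lemma idx_sg: "n < nat pp \<Longrightarrow> idx (sg n) = n"
  unfolding idx_def using bs by (simp add: bij_betw_def inv_into_f_f)

lemma sg_in: "n < nat pp \<Longrightarrow> sg n \<in> S" using bs by (auto simp: bij_betw_def)

lemma nat_mod_lt: "nat (m mod pp) < nat pp" using ppos by simp

lemma tau_in: "s \<in> S \<Longrightarrow> tau t s \<in> S" by (simp add: tau_def sg_in[OF nat_mod_lt])

lemma tau_comp: "tau t (tau u s) = tau (u + t) s"
proof (cases "s \<in> S")
  case True
  have "idx (tau u s) = nat ((int (idx s) + u) mod pp)" using True by (simp add: tau_def idx_sg[OF nat_mod_lt])
  hence "int (idx (tau u s)) = (int (idx s) + u) mod pp" using ppos by simp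
  moreover have "((int (idx s) + u) mod pp + t) mod pp = (int (idx s) + (u + t)) mod pp"
    by (simp add: mod_simps add.assoc)
  ultimately show ?thesis using True tau_in[OF True] by (simp add: tau_def)
next
  case False thus ?thesis by (simp add: tau_def)
qed

lemma tau_comp_fun: "tau t \<circ> tau u = tau (u + t)" by (simp add: fun_eq_iff tau_comp)

lemma tau_mod: "tau (t mod pp) = tau t"
  by (simp add: fun_eq_iff tau_def mod_simps)

lemma tau_0: "tau 0 = id"
proof
  fix s show "tau 0 s = id s"
  proof (cases "s \<in> S")
    case True
    have "int (idx s) < pp" using idx_in[OF True] by (simp add: zless_nat_eq_int_zless)
    hence "int (idx s) mod pp = int (idx s)" by (intro mod_pos_pos_trivial) simp_all
    thus ?thesis using True idx_in[OF True] by (simp add: tau_def)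
  qed (simp add: tau_def)
qed

lemma tau_perm: "tau t permutes S"
  unfolding permutes_def
proof (intro conjI allI impI)
  fix x assume "x \<notin> S" thus "tau t x = x" by (simp add: tau_def)
next
  fix y
  show "\<exists>!x. tau t x = y"
  proof (rule ex1I[of _ "tau (- t) y"])
    show "tau t (tau (- t) y) = y" using tau_0 by (simp add: tau_comp)
  next
    fix x assume "tau t x = y"
    hence "tau (- t) (tau t x) = tau (- t) y" by simp
    thus "x = tau (- t) y" using tau_0 by (simp add: tau_comp)
  qed
qed

lemma tau_eq: assumes "tau t = tau u" shows "t mod pp = u mod pp"
proof -
  have z: "0 < nat pp" using ppos by simp
  have s0: "sg 0 \<in> S" using sg_in[OF z] .
  have i0: "idx (sg 0) = 0" using idx_sg[OF z] .
  have "sg (nat (t mod pp)) = sg (nat (u mod pp))"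
    using assms s0 i0 by (metis (no_types) tau_def add_0 of_nat_0)
  hence "nat (t mod pp) = nat (u mod pp)"
    using bs nat_mod_lt by (simp add: bij_betw_def inj_on_def)
  thus ?thesis using ppos by (metis eq_nat_nat_iff pos_mod_sign)
qed

end

lemma bij_cancel1: "bij f \<Longrightarrow> f \<circ> (inv f \<circ> g) = g"
  by (simp add: fun_eq_iff bij_is_surj surj_f_inv_f)
lemma bij_cancel2: "bij f \<Longrightarrow> (g \<circ> f) \<circ> inv f = g"
  by (simp add: fun_eq_iff bij_is_surj surj_f_inv_f)

context affq begin

theorem sc: assumes det: "(ma * md - mb * mc) mod p \<noteq> 1"
  shows "simply_connected Q opr TYPE('s)"
  unfolding simply_connected_def
proof (intro conjI allI impI)
  show "quandle_connected Q opr" by (rule connected)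
next
  fix S :: "'s set" and th
  assume coc: "quandle_cocycle Q opr S th"
  have perm: "\<And>x y. x \<in> Q \<Longrightarrow> y \<in> Q \<Longrightarrow> th x y permutes S" using coc by (simp add: quandle_cocycle_def)
  have cq: "\<And>x y z. x \<in> Q \<Longrightarrow> y \<in> Q \<Longrightarrow> z \<in> Q \<Longrightarrow>
     th (opr x y) (opr x z) \<circ> th x z = th x (opr y z) \<circ> th y z" using coc by (simp add: quandle_cocycle_def)
  have dia: "\<And>x. x \<in> Q \<Longrightarrow> th x x = id" using coc by (simp add: quandle_cocycle_def)
  define gi where "gi z = inv_into Q G z" for z
  have gi: "\<And>z. z \<in> Q \<Longrightarrow> gi z \<in> Q \<and> G (gi z) = z"
  proof -
    fix z assume z: "z \<in> Q"
    have zi: "z \<in> G ` Q" using G_bij z by (simp add: bij_betw_imp_surj_on)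
    show "gi z \<in> Q \<and> G (gi z) = z" unfolding gi_def using inv_into_into[OF zi] f_inv_into_f[OF zi] by simp
  qed
  have giG: "\<And>x. x \<in> Q \<Longrightarrow> gi (G x) = x"
    unfolding gi_def using G_bij by (simp add: bij_betw_imp_inj_on inv_into_f_f)
  define rho where "rho z = th (gi z) vo" for z
  have rp: "\<And>z. z \<in> Q \<Longrightarrow> rho z permutes S" unfolding rho_def using gi perm by simp
  have r0: "rho vo = id" unfolding rho_def using giG[of vo] dia by simp
  define th' where "th' x y = inv (rho (opr x y)) \<circ> th x y \<circ> rho y" for x y
  have n1: "\<And>x y. x \<in> Q \<Longrightarrow> y \<in> Q \<Longrightarrow> th' x y permutes S"
    unfolding th'_def using rp perm by (simp add: permutes_compose permutes_inv)
  have n2: "\<And>x y z. x \<in> Q \<Longrightarrow> y \<in> Q \<Longrightarrow> z \<in> Q \<Longrightarrow>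
     th' (opr x y) (opr x z) \<circ> th' x z = th' x (opr y z) \<circ> th' y z"
  proof -
    fix x y z assume x: "x \<in> Q" and y: "y \<in> Q" and z: "z \<in> Q"
    have i1: "rho (opr x z) \<circ> inv (rho (opr x z)) = id" using rp[of "opr x z"] by (simp add: permutes_inv_o)
    have i2: "rho (opr y z) \<circ> inv (rho (opr y z)) = id" using rp[of "opr y z"] by (simp add: permutes_inv_o)
    have d: "opr (opr x y) (opr x z) = opr x (opr y z)" by (rule op_dist[symmetric])
    have "th' (opr x y) (opr x z) \<circ> th' x z
        = inv (rho (opr x (opr y z))) \<circ> th (opr x y) (opr x z) \<circ> (rho (opr x z) \<circ> inv (rho (opr x z))) \<circ> th x z \<circ> rho z"
      unfolding th'_def d by (simp add: o_assoc)
    also have "\<dots> = inv (rho (opr x (opr y z))) \<circ> (th (opr x y) (opr x z) \<circ> th x z) \<circ> rho z"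
      unfolding i1 by (simp add: o_assoc)
    also have "\<dots> = inv (rho (opr x (opr y z))) \<circ> (th x (opr y z) \<circ> th y z) \<circ> rho z"
      using cq[OF x y z] by simp
    also have "\<dots> = inv (rho (opr x (opr y z))) \<circ> th x (opr y z) \<circ> (rho (opr y z) \<circ> inv (rho (opr y z))) \<circ> th y z \<circ> rho z"
      unfolding i2 by (simp add: o_assoc)
    also have "\<dots> = th' x (opr y z) \<circ> th' y z"
      unfolding th'_def by (simp add: o_assoc)
    finally show "th' (opr x y) (opr x z) \<circ> th' x z = th' x (opr y z) \<circ> th' y z" .
  qed
  have n3: "th' x x = id" if x: "x \<in> Q" for x
    unfolding th'_def using rp[OF x] dia[OF x] op_idem[OF x] by (simp add: permutes_inv_o)
  have n4: "\<forall>x\<in>Q. th' x vo = id"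
  proof
    fix x assume x: "x \<in> Q"
    have "rho (opr x vo) = th x vo" unfolding rho_def using x by (simp add: op_o giG)
    thus "th' x vo = id" unfolding th'_def using r0 perm[OF x vo_Q] by (simp add: permutes_inv_o)
  qed
  have qc: "quandle_cocycle Q opr S th'" unfolding quandle_cocycle_def using n1 n2 n3 by blast
  have nc: "ncoc p ma mb mc md S th'"
    using qc n4 by (intro ncoc.intro ncoc_axioms.intro affq_axioms) simp_all
  have tid: "th' x y = id" if x: "x \<in> Q" and y: "y \<in> Q" for x y using ncoc.th_id[OF nc det x y] .
  show "cohomologous_trivial Q opr S th"
    unfolding cohomologous_trivial_def
  proof (intro exI conjI ballI)
    fix x assume "x \<in> Q" thus "rho x permutes S" by (rule rp)
  next
    fix x y assume x: "x \<in> Q" and y: "y \<in> Q"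
    have b1: "bij (rho (opr x y))" using rp[of "opr x y"] by (simp add: permutes_bij)
    have b2: "bij (rho y)" using rp[OF y] by (simp add: permutes_bij)
    have "th x y = rho (opr x y) \<circ> (inv (rho (opr x y)) \<circ> th x y)" by (rule bij_cancel1[OF b1, symmetric])
    also have "\<dots> = rho (opr x y) \<circ> (inv (rho (opr x y)) \<circ> th x y \<circ> rho y) \<circ> inv (rho y)"
      using bij_cancel2[OF b2, of "rho (opr x y) \<circ> (inv (rho (opr x y)) \<circ> th x y)"] by (simp add: o_assoc)
    also have "\<dots> = rho (opr x y) \<circ> inv (rho y)" using tid[OF x y] by (simp add: th'_def)
    finally show "th x y = rho (opr x y) \<circ> inv (rho y)" .
  qed
qed

end
definition phi :: "int \<times> int \<Rightarrow> int \<times> int \<Rightarrow> int" where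
  "phi x y = fst x * snd y - snd x * fst y"

lemma cong_norm3: "[X = X0] (mod p) \<Longrightarrow> [Y = Y0] (mod p) \<Longrightarrow> X0 - Y0 = D * K \<Longrightarrow> p dvd D \<Longrightarrow> X mod p = Y mod (p::int)"
  by (metis cong_def cong_iff_dvd_diff cong_sym cong_trans dvd_mult2)

context affq begin

lemma phi_coc: assumes det1: "(ma * md - mb * mc) mod p = 1"
  shows "(phi x z + phi (opr x y) (opr x z)) mod p = (phi y z + phi x (opr y z)) mod p"
proof -
  have dv: "p dvd (ma * md - mb * mc - 1)" using det1 p_gt1
    by (metis mod_eq_dvd_iff mod_pos_pos_trivial zero_le_one)
  obtain x1 x2 y1 y2 z1 z2 where xx: "x = (x1, x2)" "y = (y1, y2)" "z = (z1, z2)"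
    by (cases x, cases y, cases z) auto
  show ?thesis
    unfolding xx phi_def aff_op_def mat_apply_def Let_def
    apply (simp only: prod.case fst_conv snd_conv)
    apply (rule cong_norm3[where D = "ma * md - mb * mc - 1" and K = "(y1 * z2 - y2 * z1) - (x1 * (z2 - y2) - x2 * (z1 - y1))"])
       apply (rule cstrip)+
     apply (simp add: algebra_simps)
    apply (rule dv)
    done
qed

end
context affq begin

lemma P12: "opr (F e1) (opr e2 vo) = opr (F e2) (opr e1 vo)"
  unfolding aff_op_def mat_apply_def Let_def
  apply (simp only: prod.case fst_conv snd_conv prod_eq_iff)
  apply (rule conjI)
  apply (rule cong_norm, (rule cstrip)+, simp add: algebra_simps)+
  done

lemma phi_contra: assumes det1: "(ma * md - mb * mc) mod p = 1"
  and eq: "phi (F e1) (G e2) mod p = phi (F e2) (G e1) mod p" shows False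
proof -
  have dv: "p dvd (ma * md - mb * mc - 1)" using det1 p_gt1
    by (metis mod_eq_dvd_iff mod_pos_pos_trivial zero_le_one)
  have e: "(ma * (1 - md) - mc * (- mb)) mod p = (mb * (- mc) - md * (1 - ma)) mod p"
  proof -
    have "(ma * (1 - md) - mc * (- mb)) mod p = phi (F e1) (G e2) mod p"
      unfolding phi_def mat_apply_def by (simp only: prod.case fst_conv snd_conv) (rule cong_norm, (rule cstrip)+, simp)
    also have "\<dots> = phi (F e2) (G e1) mod p" by (rule eq)
    also have "\<dots> = (mb * (- mc) - md * (1 - ma)) mod p"
      unfolding phi_def mat_apply_def by (simp only: prod.case fst_conv snd_conv) (rule cong_norm, (rule cstrip)+, simp)
    finally show ?thesis .
  qed
  hence dv2: "p dvd ((ma * (1 - md) - mc * (- mb)) - (mb * (- mc) - md * (1 - ma)))"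
    by (simp add: mod_eq_dvd_iff)
  have h: "(1 - ma) * (1 - md) - mb * mc = - ((ma * (1 - md) - mc * (- mb)) - (mb * (- mc) - md * (1 - ma))) - (ma * md - mb * mc - 1)"
    by (simp add: algebra_simps)
  have "p dvd (- ((ma * (1 - md) - mc * (- mb)) - (mb * (- mc) - md * (1 - ma))) - (ma * md - mb * mc - 1))"
    using dv dv2 by (rule_tac dvd_diff) (simp_all only: dvd_minus_iff)
  hence "p dvd ((1 - ma) * (1 - md) - mb * mc)" by (simp only: h)
  thus False using dg by (simp add: dvd_eq_mod_eq_0)
qed

theorem nsc: assumes det1: "(ma * md - mb * mc) mod p = 1" and inf: "infinite (UNIV :: 's set)"
  shows "\<not> simply_connected Q opr TYPE('s)"
proof
  assume scn: "simply_connected Q opr TYPE('s)"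
  obtain S :: "'s set" where S: "finite S" "card S = nat p"
    using infinite_arbitrarily_large[OF inf] by blast
  obtain sg where sg: "bij_betw sg {0..<nat p} S" using ex_bij_betw_nat_finite[OF S(1)] S(2) by auto
  interpret T: tauloc p sg S using p_pos sg by unfold_locales
  define th where "th x y = T.tau (phi x y)" for x y
  have coc: "quandle_cocycle Q opr S th"
    unfolding quandle_cocycle_def
  proof (intro conjI ballI)
    fix x y assume "x \<in> Q" "y \<in> Q" show "th x y permutes S" by (simp add: th_def T.tau_perm)
  next
    fix x y z assume "x \<in> Q" "y \<in> Q" "z \<in> Q"
    have "th (opr x y) (opr x z) \<circ> th x z = T.tau ((phi x z + phi (opr x y) (opr x z)) mod p)"
      by (simp add: th_def T.tau_comp_fun T.tau_mod)
    also have "\<dots> = T.tau ((phi y z + phi x (opr y z)) mod p)" using phi_coc[OF det1] by simp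
    also have "\<dots> = th x (opr y z) \<circ> th y z" by (simp add: th_def T.tau_comp_fun T.tau_mod)
    finally show "th (opr x y) (opr x z) \<circ> th x z = th x (opr y z) \<circ> th y z" .
  next
    fix x assume "x \<in> Q" show "th x x = id" by (simp add: th_def phi_def T.tau_0 mult.commute)
  qed
  hence "cohomologous_trivial Q opr S th" using scn by (simp add: simply_connected_def)
  then obtain gam where gp: "\<forall>x\<in>Q. gam x permutes S"
    and ge: "\<forall>x\<in>Q. \<forall>y\<in>Q. th x y = gam (opr x y) \<circ> inv (gam y)"
    unfolding cohomologous_trivial_def by blast
  have bij1: "bij (gam (opr e2 vo))" using permutes_bij gp op_Q by blast
  have bij2: "bij (gam (opr e1 vo))" using permutes_bij gp op_Q by blast
  have "th (F e1) (opr e2 vo) \<circ> th e2 vo = gam (opr (F e1) (opr e2 vo)) \<circ> (inv (gam (opr e2 vo)) \<circ> gam (opr e2 vo)) \<circ> inv (gam vo)"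
    using ge by (simp add: o_assoc)
  also have "\<dots> = gam (opr (F e1) (opr e2 vo)) \<circ> inv (gam vo)"
    using bij1 by (simp add: bij_is_inj)
  also have "\<dots> = gam (opr (F e2) (opr e1 vo)) \<circ> inv (gam vo)" by (simp only: P12)
  also have "\<dots> = gam (opr (F e2) (opr e1 vo)) \<circ> (inv (gam (opr e1 vo)) \<circ> gam (opr e1 vo)) \<circ> inv (gam vo)"
    using bij2 by (simp add: bij_is_inj)
  also have "\<dots> = th (F e2) (opr e1 vo) \<circ> th e1 vo"
    using ge by (simp add: o_assoc)
  finally have "th (F e1) (opr e2 vo) \<circ> th e2 vo = th (F e2) (opr e1 vo) \<circ> th e1 vo" .
  hence "T.tau (phi (F e1) (G e2)) = T.tau (phi (F e2) (G e1))"
    by (simp add: th_def T.tau_comp_fun op_o phi_def)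
  hence "phi (F e1) (G e2) mod p = phi (F e2) (G e1) mod p" by (rule T.tau_eq)
  thus False using phi_contra[OF det1] by blast
qed

end
lemma affq_iff:
  assumes aq: "affq p ma mb mc md" and inf: "infinite (UNIV :: 's set)"
  shows "simply_connected (Zp2 p) (aff_op p (ma, mb, mc, md)) TYPE('s) \<longleftrightarrow> (ma * md - mb * mc) mod p \<noteq> 1"
proof (cases "(ma * md - mb * mc) mod p = 1")
  case True thus ?thesis using affq.nsc[OF aq True inf] by simp
next
  case False thus ?thesis using affq.sc[OF aq False] by simp
qed

lemma not_dvd_small: "0 < x \<Longrightarrow> x < p \<Longrightarrow> \<not> (p::int) dvd x"
  using zdvd_imp_le by fastforce

theorem theorem3p16:
  fixes p :: int
  assumes "prime p" and "infinite (UNIV :: 's set)"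
  shows "(\<forall>b c. 1 < b \<and> b \<le> c \<and> c < p \<longrightarrow>
            (simply_connected (Zp2 p) (aff_op p (Dmat b c)) TYPE('s)
               \<longleftrightarrow> (b * c) mod p \<noteq> 1))
       \<and> (\<forall>b. 1 < b \<and> b < p \<longrightarrow>
            (simply_connected (Zp2 p) (aff_op p (Gmat b)) TYPE('s)
               \<longleftrightarrow> b mod p \<noteq> (-1) mod p))
       \<and> (\<forall>b1 b0. b1 \<in> {0..<p} \<and> b0 \<in> {0..<p} \<and> irreducible_quadratic_mod p b1 b0 \<longrightarrow>
            (simply_connected (Zp2 p) (aff_op p (Hmat b1 b0)) TYPE('s)
               \<longleftrightarrow> b0 \<noteq> 1))"
proof (intro conjI allI impI)
  have pr: "prime p" by fact
  have inf: "infinite (UNIV :: 's set)" by fact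
  have p1: "p > 1" using pr prime_gt_1_int by blast
  {
    fix b c :: int assume bc: "1 < b \<and> b \<le> c \<and> c < p"
    have nb: "\<not> p dvd b" "\<not> p dvd c" using bc not_dvd_small[of b p] not_dvd_small[of c p] by auto
    have nb1: "\<not> p dvd (b - 1)" "\<not> p dvd (c - 1)" using bc not_dvd_small[of "b - 1" p] not_dvd_small[of "c - 1" p] by auto
    have "\<not> p dvd (b * c)" using nb pr prime_dvd_mult_iff by blast
    hence d1: "(b * c - 0 * 0) mod p \<noteq> 0" by (simp add: dvd_eq_mod_eq_0)
    have "\<not> p dvd ((b - 1) * (c - 1))" using nb1 pr prime_dvd_mult_iff by blast
    moreover have "(1 - b) * (1 - c) - 0 * 0 = (b - 1) * (c - 1)" by (simp add: algebra_simps)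
    ultimately have d2: "((1 - b) * (1 - c) - 0 * 0) mod p \<noteq> 0" by (simp add: dvd_eq_mod_eq_0)
    have aq: "affq p b 0 0 c" using pr d1 d2 by (unfold_locales) simp_all
    show "simply_connected (Zp2 p) (aff_op p (Dmat b c)) TYPE('s) \<longleftrightarrow> (b * c) mod p \<noteq> 1"
      using affq_iff[OF aq inf] by (simp add: Dmat_def)
  }
  {
    fix b :: int assume bb: "1 < b \<and> b < p"
    have nb: "\<not> p dvd b" using bb not_dvd_small[of b p] by auto
    have nb1: "\<not> p dvd (b - 1)" using bb not_dvd_small[of "b - 1" p] by auto
    have "\<not> p dvd (b * b)" using nb pr prime_dvd_mult_iff by blast
    hence d1: "(b * b - 1 * 0) mod p \<noteq> 0" by (simp add: dvd_eq_mod_eq_0)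
    have "\<not> p dvd ((b - 1) * (b - 1))" using nb1 pr prime_dvd_mult_iff by blast
    moreover have "(1 - b) * (1 - b) - 1 * 0 = (b - 1) * (b - 1)" by (simp add: algebra_simps)
    ultimately have d2: "((1 - b) * (1 - b) - 1 * 0) mod p \<noteq> 0" by (simp add: dvd_eq_mod_eq_0)
    have aq: "affq p b 1 0 b" using pr d1 d2 by (unfold_locales) simp_all
    have "(b * b - 1 * 0) mod p = 1 \<longleftrightarrow> p dvd ((b - 1) * (b + 1))"
    proof -
      have "(b * b - 1 * 0) mod p = 1 \<longleftrightarrow> (b * b) mod p = 1 mod p" using p1 by simp
      also have "\<dots> \<longleftrightarrow> p dvd (b * b - 1)" by (simp add: mod_eq_dvd_iff)
      also have "b * b - 1 = (b - 1) * (b + 1)" by (simp add: algebra_simps)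
      finally show ?thesis .
    qed
    also have "\<dots> \<longleftrightarrow> p dvd (b + 1)" using nb1 pr prime_dvd_mult_iff by blast
    also have "\<dots> \<longleftrightarrow> b mod p = (-1) mod p" by (simp add: mod_eq_dvd_iff)
    finally have cr: "(b * b - 1 * 0) mod p = 1 \<longleftrightarrow> b mod p = (-1) mod p" .
    show "simply_connected (Zp2 p) (aff_op p (Gmat b)) TYPE('s) \<longleftrightarrow> b mod p \<noteq> (-1) mod p"
      using affq_iff[OF aq inf] cr by (simp add: Gmat_def)
  }
  {
    fix b1 b0 :: int assume bq: "b1 \<in> {0..<p} \<and> b0 \<in> {0..<p} \<and> irreducible_quadratic_mod p b1 b0"
    have irr: "irreducible_quadratic_mod p b1 b0" using bq by simp
    have d1: "(0 * - b1 - 1 * - b0) mod p \<noteq> 0"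
    proof
      assume "(0 * - b1 - 1 * - b0) mod p = 0"
      hence z: "b0 mod p = 0" by simp
      have "(1::int) mod p \<noteq> 0 \<and> (1::int) mod p \<noteq> 0 \<and> (1 * 1) mod p = 1 mod p \<and>
          (1 * b1 + 0 * 1) mod p = b1 mod p \<and> (0 * b1) mod p = b0 mod p" using p1 z by simp
      thus False using irr unfolding irreducible_quadratic_mod_def by blast
    qed
    have d2: "((1 - 0) * (1 - - b1) - 1 * - b0) mod p \<noteq> 0"
    proof
      assume "((1 - 0) * (1 - - b1) - 1 * - b0) mod p = 0"
      hence z: "p dvd (1 + b1 + b0)" by (simp add: dvd_eq_mod_eq_0 algebra_simps)
      have "1 mod p \<noteq> 0" using p1 by simp
      moreover have "((-1) * (b1 + 1)) mod p = b0 mod p"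
      proof -
        have e: "(-1) * (b1 + 1) - b0 = - (1 + b1 + b0)" by simp
        have "p dvd (- (1 + b1 + b0))" using z by (simp only: dvd_minus_iff)
        hence "p dvd ((-1) * (b1 + 1) - b0)" by (simp only: e)
        thus ?thesis by (simp add: mod_eq_dvd_iff)
      qed
      moreover have "(1 * (b1 + 1) + (-1) * 1) mod p = b1 mod p" by simp
      moreover have "(1 * 1) mod p = 1 mod p" by simp
      ultimately show False using irr unfolding irreducible_quadratic_mod_def by blast
    qed
    have aq: "affq p 0 1 (- b0) (- b1)" using pr d1 d2 by (unfold_locales) simp_all
    have cr: "(0 * - b1 - 1 * - b0) mod p = 1 \<longleftrightarrow> b0 = 1" using bq by simp
    show "simply_connected (Zp2 p) (aff_op p (Hmat b1 b0)) TYPE('s) \<longleftrightarrow> b0 \<noteq> 1"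
      using affq_iff[OF aq inf] cr by (simp add: Hmat_def)
  }
qed


end
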